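(* Suppose that for every integer $n \geq 3$ and every convex polygon $P \subset \mathbb{R}^2$ with $n$ vertices, the slack matrix $S_P$ satisfies $\operatorname{rank}_+(S_P) \leq \left\lfloor \frac{n+6}{2} \right\rfloor$. Then every nonnegative matrix $X \in \mathbb{R}^{m \times n}_+$ with $\operatorname{rank}(X) = 3$ satisfies \[ \operatorname{rank}_+(X) \; \leq \; \left\lfloor \frac{\min(m,n)+6}{2} \right\rfloor . \]
   Context: For a nonnegative matrix $X \in \mathbb{R}^{m\times n}_+$, the nonnegative rank $\operatorname{rank}_+(X)$ is the smallest integer $r$ such that there exist $W \in \mathbb{R}^{m\times r}_+$ and $H \in \mathbb{R}^{r\times n}_+$ with $X = WH$. The slack matrix of a polytope $P = \{x \in \mathbb{R}^k : A(i,:)x \leq b_i,\ 1\le i\le m\}$ (facet description with $m$ facets) with vertices $v_1,\dots,v_n$ is the $m\times n$ nonnegative matrix with entries $b_i - A(i,:)v_j$ (the slack of vertex $j$ with respect to facet $i$). $\lfloor x \rfloor$ denotes the largest integer not exceeding $x$. *)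

theory Defs
  imports "HOL-Analysis.Analysis" "Jordan_Normal_Form.DL_Rank"
begin

definition nonneg_mat :: "real mat \<Rightarrow> bool" where
  "nonneg_mat X \<longleftrightarrow> (\<forall>i<dim_row X. \<forall>j<dim_col X. X $$ (i, j) \<ge> 0)"

definition nonneg_rank :: "real mat \<Rightarrow> nat" where
  "nonneg_rank X = (LEAST r. \<exists>W H. W \<in> carrier_mat (dim_row X) r \<and> H \<in> carrier_mat r (dim_col X)
       \<and> nonneg_mat W \<and> nonneg_mat H \<and> X = W * H)"

definition real_rank :: "real mat \<Rightarrow> nat" where
  "real_rank X = vec_space.rank (dim_row X) X"

definition convex_polygon_vertices :: "nat \<Rightarrow> (nat \<Rightarrow> real^2) \<Rightarrow> bool" where
  "convex_polygon_vertices n v \<longleftrightarrow> inj_on v {..<n} \<and>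
     (\<forall>j<n. v j extreme_point_of (convex hull (v ` {..<n})))"

definition facet_description :: "(real^2) set \<Rightarrow> nat \<Rightarrow> (nat \<Rightarrow> real^2) \<Rightarrow> (nat \<Rightarrow> real) \<Rightarrow> bool" where
  "facet_description P m a b \<longleftrightarrow>
     P = {x. \<forall>i<m. a i \<bullet> x \<le> b i} \<and>
     (\<forall>i<m. {x \<in> P. a i \<bullet> x = b i} facet_of P) \<and>
     inj_on (\<lambda>i. {x \<in> P. a i \<bullet> x = b i}) {..<m}"

definition slack_matrix :: "nat \<Rightarrow> nat \<Rightarrow> (nat \<Rightarrow> real^2) \<Rightarrow> (nat \<Rightarrow> real) \<Rightarrow> (nat \<Rightarrow> real^2) \<Rightarrow> real mat" where
  "slack_matrix m n a b v = Matrix.mat m n (\<lambda>(i, j). b i - a i \<bullet> v j)"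

end

theory Submission
  imports Defs
begin


lemma bounded_ray:
  fixes x d :: "'a::real_normed_vector"
  assumes "bounded P" "\<And>s. s \<ge> 0 \<Longrightarrow> x + s *\<^sub>R d \<in> P"
  shows "d = 0"
proof (rule ccontr)
  assume d: "d \<noteq> 0"
  obtain B where B: "\<And>y. y \<in> P \<Longrightarrow> norm y \<le> B" using assms(1) bounded_iff by blast
  define s where "s = (B + norm x + 1) / norm d"
  have nd: "norm d > 0" using d by simp
  have "norm (x + 0 *\<^sub>R d) \<le> B" using B assms(2)[of 0] by simp
  then have B0: "0 \<le> B + norm x + 1" by (smt (verit) norm_ge_zero)
  then have s0: "s \<ge> 0" using nd unfolding s_def by (rule divide_nonneg_pos)
  have "norm (s *\<^sub>R d) \<le> norm (x + s *\<^sub>R d) + norm x"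
    by (metis add_diff_cancel_left' norm_triangle_ineq4 add.commute)
  moreover have "norm (s *\<^sub>R d) = B + norm x + 1" using nd s0 B0 by (simp add: s_def)
  moreover have "norm (x + s *\<^sub>R d) \<le> B" using B assms(2) s0 by blast
  ultimately show False by linarith
qed

lemma farkas_poly:
  fixes a :: "nat \<Rightarrow> 'a::euclidean_space" and b :: "nat \<Rightarrow> real" and g :: 'a
  assumes P: "P = {x. \<forall>i<M. a i \<bullet> x \<le> b i}" and bnd: "bounded P"
   and x1: "x1 \<in> P" and x2: "x2 \<in> P" and ne: "x1 \<noteq> x2"
   and nn: "\<forall>x\<in>P. 0 \<le> g \<bullet> x + h"
  shows "\<exists>l. (\<forall>i<M. 0 \<le> l i) \<and> (\<forall>x. g \<bullet> x + h = (\<Sum>i<M. l i * (b i - a i \<bullet> x)))"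
proof -
  define \<phi> :: "nat \<Rightarrow> 'a \<times> real" where "\<phi> i = (- a i, b i)" for i
  define C where "C = convex_cone hull (\<phi> ` {..<M})"
  define K where "K = {(\<Sum>i<M. l i *\<^sub>R \<phi> i) | l. \<forall>i<M. 0 \<le> l i}"
  have cK: "convex_cone K"
    unfolding convex_cone_iff
  proof (intro conjI ballI allI impI)
    show "0 \<in> K" unfolding K_def by (rule CollectI, rule exI[of _ "\<lambda>_. 0"]) simp
  next
    fix x y assume "x \<in> K" "y \<in> K"
    then obtain l l' where "x = (\<Sum>i<M. l i *\<^sub>R \<phi> i)" "\<forall>i<M. 0 \<le> l i"
      "y = (\<Sum>i<M. l' i *\<^sub>R \<phi> i)" "\<forall>i<M. 0 \<le> l' i" unfolding K_def by blast
    then show "x + y \<in> K" unfolding K_def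
      by (intro CollectI exI[of _ "\<lambda>i. l i + l' i"]) (simp add: scaleR_add_left sum.distrib)
  next
    fix x and c :: real assume "x \<in> K" "0 \<le> c"
    then obtain l where "x = (\<Sum>i<M. l i *\<^sub>R \<phi> i)" "\<forall>i<M. 0 \<le> l i" unfolding K_def by blast
    then show "c *\<^sub>R x \<in> K" unfolding K_def using \<open>0 \<le> c\<close>
      by (intro CollectI exI[of _ "\<lambda>i. c * l i"]) (simp add: scaleR_sum_right)
  qed
  have phiK: "\<phi> ` {..<M} \<subseteq> K"
  proof
    fix z assume "z \<in> \<phi> ` {..<M}"
    then obtain j where j: "j < M" "z = \<phi> j" by auto
    have "(\<Sum>i<M. (if i = j then 1 else 0) *\<^sub>R \<phi> i) = \<phi> j"
      using j(1) by (simp add: if_distrib[of "\<lambda>c. c *\<^sub>R _"] cong: if_cong)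
    then show "z \<in> K" unfolding K_def using j
      by (intro CollectI exI[of _ "\<lambda>i. if i = j then 1 else 0"]) auto
  qed
  have CK: "C \<subseteq> K" unfolding C_def by (rule hull_minimal[where S=convex_cone, OF phiK cK])
  have "(g, h) \<in> C"
  proof (rule ccontr)
    assume nC: "(g, h) \<notin> C"
    have "closed C" unfolding C_def by (rule closed_convex_cone_hull) simp
    moreover have "convex C" unfolding C_def by (rule convex_convex_cone_hull)
    ultimately obtain y c where yc: "y \<bullet> (g, h) < c" "\<And>z. z \<in> C \<Longrightarrow> c < y \<bullet> z"
      using separating_hyperplane_closed_point[OF _ _ nC] by blast
    have c0: "c < 0" using yc(2)[of 0] by (simp add: C_def convex_cone_hull_contains_0)
    have yphi: "0 \<le> y \<bullet> \<phi> i" if "i < M" for i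
    proof (rule ccontr)
      assume neg: "\<not> 0 \<le> y \<bullet> \<phi> i"
      have inC: "\<phi> i \<in> C" unfolding C_def using that by (simp add: hull_inc)
      define t where "t = c / (y \<bullet> \<phi> i)"
      have "t \<ge> 0" using neg c0 by (simp add: t_def divide_nonpos_neg)
      then have "t *\<^sub>R \<phi> i \<in> C" using inC unfolding C_def by (rule convex_cone_hull_mul[rotated])
      then have "c < y \<bullet> (t *\<^sub>R \<phi> i)" by (rule yc(2))
      moreover have "y \<bullet> (t *\<^sub>R \<phi> i) = c" using neg by (simp add: t_def)
      ultimately show False by simp
    qed
    obtain z t where y: "y = (z, t)" by (cases y)
    have hz: "a i \<bullet> z \<le> t * b i" if "i < M" for i
      using yphi[OF that] by (simp add: y \<phi>_def inner_commute)
    have ygh: "g \<bullet> z + t * h < 0" using yc(1) c0 by (simp add: y inner_commute mult.commute)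
    consider "t > 0" | "t = 0" | "t < 0" by linarith
    then show False
    proof cases
      case 1
      have "(1/t) *\<^sub>R z \<in> P" unfolding P
      proof (intro CollectI allI impI)
        fix i assume "i < M"
        from hz[OF this] 1 show "a i \<bullet> ((1/t) *\<^sub>R z) \<le> b i"
          by (simp add: field_simps)
      qed
      then have "0 \<le> g \<bullet> ((1/t) *\<^sub>R z) + h" using nn by blast
      then have "0 \<le> t * (g \<bullet> ((1/t) *\<^sub>R z) + h)" using 1 by simp
      also have "\<dots> = g \<bullet> z + t * h" using 1 by (simp add: algebra_simps)
      finally show False using ygh by simp
    next
      case 2
      have "x1 + s *\<^sub>R z \<in> P" if "s \<ge> 0" for s
        unfolding P
      proof (intro CollectI allI impI)
        fix i assume i: "i < M"
        have "a i \<bullet> x1 \<le> b i" using x1 i unfolding P by blast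
        moreover have "s * (a i \<bullet> z) \<le> 0" using hz[OF i] 2 that by (simp add: mult_nonneg_nonpos)
        ultimately show "a i \<bullet> (x1 + s *\<^sub>R z) \<le> b i" by (simp add: inner_add_right)
      qed
      then have "z = 0" by (intro bounded_ray[OF bnd]) 
      then show False using ygh 2 by simp
    next
      case 3
      define q where "q = (1/t) *\<^sub>R z"
      have qa: "b i \<le> a i \<bullet> q" if "i < M" for i
        using hz[OF that] 3 by (simp add: q_def field_simps)
      have "x = q" if x: "x \<in> P" for x
      proof -
        have "x + s *\<^sub>R (x - q) \<in> P" if "s \<ge> 0" for s
          unfolding P
        proof (intro CollectI allI impI)
          fix i assume i: "i < M"
          have "a i \<bullet> x \<le> b i" using x i unfolding P by blast
          then have "a i \<bullet> (x - q) \<le> 0" using qa[OF i] by (simp add: inner_diff_right)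
          then have "s * (a i \<bullet> (x - q)) \<le> 0" using that by (simp add: mult_nonneg_nonpos)
          then show "a i \<bullet> (x + s *\<^sub>R (x - q)) \<le> b i" using \<open>a i \<bullet> x \<le> b i\<close>
            by (simp add: inner_add_right)
        qed
        then have "x - q = 0" by (intro bounded_ray[OF bnd])
        then show ?thesis by simp
      qed
      then show False using x1 x2 ne by metis
    qed
  qed
  then have "(g, h) \<in> K" using CK by blast
  then obtain l where l: "(g, h) = (\<Sum>i<M. l i *\<^sub>R \<phi> i)" "\<forall>i<M. 0 \<le> l i"
    unfolding K_def by blast
  have g: "g = (\<Sum>i<M. l i *\<^sub>R (- a i))"
    using arg_cong[OF l(1), of fst] by (simp add: fst_sum \<phi>_def)
  have h: "h = (\<Sum>i<M. l i * b i)"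
    using arg_cong[OF l(1), of snd] by (simp add: snd_sum \<phi>_def)
  show ?thesis
  proof (intro exI[of _ l] conjI)
    show "\<forall>i<M. 0 \<le> l i" by (rule l(2))
    show "\<forall>x. g \<bullet> x + h = (\<Sum>i<M. l i * (b i - a i \<bullet> x))"
      by (simp add: g h inner_sum_left right_diff_distrib sum_subtractf sum_negf)
  qed
qed


lemma facet_witness:
  fixes S :: "'a::euclidean_space set"
  assumes "finite F"
      and seq: "S = affine hull S \<inter> \<Inter>F"
      and faceq: "\<And>h. h \<in> F \<Longrightarrow> a h \<noteq> 0 \<and> h = {x. a h \<bullet> x \<le> b h}"
      and psub: "\<And>F'. F' \<subset> F \<Longrightarrow> S \<subset> affine hull S \<inter> \<Inter>F'"
      and hF: "h \<in> F"
    shows "\<exists>w\<in>S. a h \<bullet> w = b h \<and> (\<forall>i\<in>F. i \<noteq> h \<longrightarrow> a i \<bullet> w < b i)"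
proof -
  have "F - {h} \<subset> F" using hF by blast
  from psub[OF this] have "S \<noteq> {}" by auto
  have "polyhedron S"
    unfolding polyhedron_Int_affine by (metis \<open>finite F\<close> faceq seq)
  then have "convex S"
    by (rule polyhedron_imp_convex)
  with \<open>S \<noteq> {}\<close> rel_interior_eq_empty have "rel_interior S \<noteq> {}" by blast
  then obtain x where "x \<in> rel_interior S" by auto
  then have "x \<in> S" using rel_interior_subset by blast
  then have xaff: "x \<in> affine hull S" and xint: "x \<in> \<Inter>F"
    using seq hull_inc by auto
  have "rel_interior S = {x \<in> S. \<forall>h\<in>F. a h \<bullet> x < b h}"
    by (rule rel_interior_polyhedron_explicit [OF \<open>finite F\<close> seq faceq psub])
  with \<open>x \<in> rel_interior S\<close>
  have [simp]: "\<And>h. h\<in>F \<Longrightarrow> a h \<bullet> x < b h" by blast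
  have "S \<subset> affine hull S \<inter> \<Inter>(F - {h})"
    using psub hF by (metis Diff_disjoint Diff_subset insert_disjoint(2) psubsetI)
  then obtain z where zaff: "z \<in> affine hull S" and zint: "z \<in> \<Inter>(F - {h})" and "z \<notin> S"
    by force
  then have "z \<noteq> x" "z \<notin> h" using seq \<open>x \<in> S\<close> by auto
  have "x \<in> h" using hF xint by auto
  then have able: "a h \<bullet> x \<le> b h"
    using faceq hF by blast
  also have "\<dots> < a h \<bullet> z" using \<open>z \<notin> h\<close> faceq [OF hF] xint by auto
  finally have xltz: "a h \<bullet> x < a h \<bullet> z" .
  have "b h < a h \<bullet> z" using \<open>z \<notin> h\<close> faceq [OF hF] by auto
  define l where "l = (b h - a h \<bullet> x) / (a h \<bullet> z - a h \<bullet> x)"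
  define w where "w = (1 - l) *\<^sub>R x + l *\<^sub>R z"
  have "0 < l" "l < 1"
    using able xltz \<open>b h < a h \<bullet> z\<close> \<open>h \<in> F\<close>
    by (auto simp: l_def field_split_simps)
  have awlt: "a i \<bullet> w < b i" if "i \<in> F" "i \<noteq> h" for i
  proof -
    have "(1 - l) * (a i \<bullet> x) < (1 - l) * b i"
      by (simp add: \<open>l < 1\<close> \<open>i \<in> F\<close>)
    moreover have "l * (a i \<bullet> z) \<le> l * b i"
    proof (rule mult_left_mono)
      show "a i \<bullet> z \<le> b i"
        by (metis DiffI Inter_iff empty_iff faceq insertE mem_Collect_eq that zint)
    qed (use \<open>0 < l\<close> in auto)
    ultimately show ?thesis by (simp add: w_def algebra_simps)
  qed
  have weq: "a h \<bullet> w = b h"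
    using xltz unfolding w_def l_def
    by (simp add: algebra_simps) (simp add: field_simps)
  have "w \<in> affine hull S"
    by (simp add: w_def mem_affine xaff zaff)
  moreover have "w \<in> \<Inter>F"
    using \<open>a h \<bullet> w = b h\<close> awlt faceq less_eq_real_def by blast
  ultimately have "w \<in> S"
    using seq by blast
  then show ?thesis using weq awlt by blast
qed

lemma facet_desc_exists:
  fixes P :: "(real^2) set"
  assumes "polytope P" "affine hull P = UNIV"
  shows "\<exists>m a b. facet_description P m a b"
proof -
  have "polyhedron P" using assms(1) by (rule polytope_imp_polyhedron)
  then obtain F where F: "finite F" and seq: "P = affine hull P \<inter> \<Inter>F"
             and faces: "\<And>h. h \<in> F \<Longrightarrow> \<exists>a b. a \<noteq> 0 \<and> h = {x. a \<bullet> x \<le> b}"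
             and min: "\<And>F'. F' \<subset> F \<Longrightarrow> P \<subset> (affine hull P) \<inter> \<Inter>F'"
    by (simp add: polyhedron_Int_affine_minimal) meson
  then obtain a b where ab: "\<And>h. h \<in> F \<Longrightarrow> a h \<noteq> 0 \<and> h = {x. a h \<bullet> x \<le> b h}"
    by metis
  obtain e where e: "bij_betw e {0..<card F} F" using ex_bij_betw_nat_finite[OF F] by blast
  define m where "m = card F"
  have e': "bij_betw e {..<m} F" using e by (simp add: m_def atLeast0LessThan)
  have eF: "e i \<in> F" if "i < m" for i using e' that by (auto simp: bij_betw_def)
  have P: "P = \<Inter>F" using seq assms(2) by simp
  have Peq: "P = {x. \<forall>i<m. a (e i) \<bullet> x \<le> b (e i)}"
  proof -
    have "F = e ` {..<m}" using e' by (simp add: bij_betw_def)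
    then show ?thesis using P ab eF by auto
  qed
  show ?thesis
  proof (intro exI)
    show "facet_description P m (\<lambda>i. a (e i)) (\<lambda>i. b (e i))"
      unfolding facet_description_def
    proof (intro conjI allI impI)
      show "P = {x. \<forall>i<m. a (e i) \<bullet> x \<le> b (e i)}" by (rule Peq)
    next
      fix i assume i: "i < m"
      have "{x \<in> P. a (e i) \<bullet> x = b (e i)} = P \<inter> {x. a (e i) \<bullet> x = b (e i)}" by blast
      then show "{x \<in> P. a (e i) \<bullet> x = b (e i)} facet_of P"
        using facet_of_polyhedron_explicit[OF F seq ab min, of "{x \<in> P. a (e i) \<bullet> x = b (e i)}"]
          eF[OF i] by auto
    next
      show "inj_on (\<lambda>i. {x \<in> P. a (e i) \<bullet> x = b (e i)}) {..<m}"
      proof (rule inj_onI)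
        fix i j assume i: "i \<in> {..<m}" and j: "j \<in> {..<m}"
          and eq: "{x \<in> P. a (e i) \<bullet> x = b (e i)} = {x \<in> P. a (e j) \<bullet> x = b (e j)}"
        show "i = j"
        proof (rule ccontr)
          assume "i \<noteq> j"
          then have "e i \<noteq> e j" using e' i j by (auto simp: bij_betw_def inj_on_def)
          obtain w where w: "w \<in> P" "a (e i) \<bullet> w = b (e i)"
            "\<forall>k\<in>F. k \<noteq> e i \<longrightarrow> a k \<bullet> w < b k"
            using facet_witness[OF F seq ab min eF] i by force
          have "w \<in> {x \<in> P. a (e j) \<bullet> x = b (e j)}" using eq w by blast
          moreover have "a (e j) \<bullet> w < b (e j)" using w(3) eF j \<open>e i \<noteq> e j\<close> by auto
          ultimately show False by simp
        qed
      qed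
    qed
  qed
qed



lemma collinear_mid:
  fixes p q r :: "'a::real_vector"
  assumes "p \<noteq> q" "p \<noteq> r" "q \<noteq> r" "r = (1 - t) *\<^sub>R p + t *\<^sub>R q"
  shows "r \<in> open_segment p q \<or> q \<in> open_segment p r \<or> p \<in> open_segment r q"
proof -
  have t0: "t \<noteq> 0" using assms by auto
  have t1: "t \<noteq> 1" using assms by auto
  consider "0 < t \<and> t < 1" | "t > 1" | "t < 0" using t0 t1 by linarith
  then show ?thesis
  proof cases
    case 1 then show ?thesis using assms by (auto simp: in_segment)
  next
    case 2
    have "(1/t) *\<^sub>R r = ((1/t)*(1-t)) *\<^sub>R p + ((1/t)*t) *\<^sub>R q"
      by (simp add: assms(4) scaleR_add_right)
    also have "(1/t)*(1-t) = 1/t - 1" using t0 by (simp add: field_simps)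
    also have "(1/t)*t = 1" using t0 by simp
    finally have rr: "(1/t) *\<^sub>R r = (1/t - 1) *\<^sub>R p + q" by simp
    have "(1 - 1/t) *\<^sub>R p + (1/t) *\<^sub>R r = ((1 - 1/t) + (1/t - 1)) *\<^sub>R p + q"
      unfolding rr scaleR_left_distrib by (simp only: add.assoc)
    then have "q = (1 - 1/t) *\<^sub>R p + (1/t) *\<^sub>R r" by simp
    moreover have "0 < 1/t" "1/t < 1" using 2 by auto
    ultimately show ?thesis using assms by (auto simp: in_segment)
  next
    case 3
    define u where "u = - t / (1 - t)"
    have t1': "1 - t \<noteq> 0" using 3 by simp
    have "(1 - u) *\<^sub>R r = ((1-u)*(1-t)) *\<^sub>R p + ((1-u)*t) *\<^sub>R q"
      by (simp add: assms(4) scaleR_add_right)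
    also have "(1-u)*(1-t) = 1" using t1' by (simp add: u_def field_simps)
    also have "(1-u)*t = -u" using t1' by (simp add: u_def field_simps)
    finally have rr: "(1 - u) *\<^sub>R r = p + (-u) *\<^sub>R q" by simp
    have "(1 - u) *\<^sub>R r + u *\<^sub>R q = p + ((-u) + u) *\<^sub>R q"
      unfolding rr scaleR_left_distrib by (simp only: add.assoc)
    then have "p = (1 - u) *\<^sub>R r + u *\<^sub>R q" by simp
    moreover have "0 < u" "u < 1" using 3 by (auto simp: u_def field_simps)
    ultimately show ?thesis using assms by (auto simp: in_segment)
  qed
qed

lemma three_extreme_indep:
  fixes x y z :: "'a::euclidean_space"
  assumes ex: "x extreme_point_of C" "y extreme_point_of C" "z extreme_point_of C"
    and d: "x \<noteq> y" "x \<noteq> z" "y \<noteq> z"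
  shows "\<not> affine_dependent {x, y, z}"
proof
  have nseg: "\<And>a b c. a extreme_point_of C \<Longrightarrow> b extreme_point_of C \<Longrightarrow> c extreme_point_of C \<Longrightarrow> c \<notin> open_segment a b"
    by (auto simp: extreme_point_of_def)
  have key: "False" if H: "a \<noteq> b" "a \<noteq> c" "b \<noteq> c" "c \<in> affine hull {a, b}"
    "a extreme_point_of C" "b extreme_point_of C" "c extreme_point_of C" for a b c
  proof -
    obtain u v where uv: "c = u *\<^sub>R a + v *\<^sub>R b" "u + v = 1"
      using H(4) by (auto simp: affine_hull_2)
    have "u = 1 - v" using uv(2) by simp
    then have "c = (1 - v) *\<^sub>R a + v *\<^sub>R b" using uv(1) by simp
    from collinear_mid[OF H(1-3) this] show False
      using nseg H(5-7) by (metis open_segment_commute)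
  qed
  assume "affine_dependent {x, y, z}"
  then obtain w where w: "w \<in> {x, y, z}" "w \<in> affine hull ({x, y, z} - {w})"
    unfolding affine_dependent_def by blast
  from w(1) consider "w = x" | "w = y" | "w = z" by blast
  then show False
  proof cases
    case 1
    then have "{x, y, z} - {w} = {y, z}" using d by auto
    then show False using key[of y z x] w 1 d ex by auto
  next
    case 2
    then have "{x, y, z} - {w} = {x, z}" using d by auto
    then show False using key[of x z y] w 2 d ex by auto
  next
    case 3
    then have "{x, y, z} - {w} = {x, y}" using d by auto
    then show False using key[of x y z] w 3 d ex by auto
  qed
qed

lemma three_extreme_full:
  fixes x y z :: "real^2"
  assumes ex: "x extreme_point_of C" "y extreme_point_of C" "z extreme_point_of C"
    and d: "x \<noteq> y" "x \<noteq> z" "y \<noteq> z"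
  shows "affine hull C = UNIV"
proof -
  have "int (card {x, y, z}) = aff_dim {x, y, z} + 1"
    using three_extreme_indep[OF assms] by (rule aff_dim_affine_independent)
  also have "card {x, y, z} = 3" using d by auto
  finally have a: "aff_dim {x, y, z} = 2" by simp
  have "{x, y, z} \<subseteq> C" using ex by (auto simp: extreme_point_of_def)
  then have "aff_dim {x, y, z} \<le> aff_dim C" by (rule aff_dim_subset)
  moreover have "aff_dim C \<le> int DIM(real^2)" by (rule aff_dim_le_DIM)
  ultimately have "aff_dim C = int DIM(real^2)" using a by simp
  then show ?thesis using aff_dim_eq_full[of C] by linarith
qed



lemma mult_entry:
  fixes A B :: "real mat"
  assumes "A \<in> carrier_mat m k" "B \<in> carrier_mat k n" "i < m" "j < n"
  shows "(A * B) $$ (i, j) = (\<Sum>l<k. A $$ (i, l) * B $$ (l, j))"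
  using assms by (auto simp: scalar_prod_def atLeast0LessThan intro!: sum.cong)

lemma nonneg_mult:
  assumes "A \<in> carrier_mat m k" "B \<in> carrier_mat k n" "nonneg_mat A" "nonneg_mat B"
  shows "nonneg_mat (A * B)"
  unfolding nonneg_mat_def
proof (intro allI impI)
  fix i j assume "i < dim_row (A * B)" "j < dim_col (A * B)"
  then have ij: "i < m" "j < n" using assms by auto
  show "0 \<le> (A * B) $$ (i, j)"
    unfolding mult_entry[OF assms(1,2) ij]
    using assms(1-4) ij by (intro sum_nonneg mult_nonneg_nonneg) (auto simp: nonneg_mat_def)
qed

lemma nr_le:
  assumes "X \<in> carrier_mat m n" "W \<in> carrier_mat m r" "H \<in> carrier_mat r n"
    "nonneg_mat W" "nonneg_mat H" "X = W * H"
  shows "nonneg_rank X \<le> r"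
  unfolding nonneg_rank_def
proof (rule Least_le, intro exI conjI)
  have "dim_row X = m" "dim_col X = n" using assms(1) by auto
  then show "W \<in> carrier_mat (dim_row X) r" "H \<in> carrier_mat r (dim_col X)"
    using assms(2,3) by simp_all
qed (use assms in simp_all)

lemma nr_exists:
  assumes "nonneg_mat X"
  shows "\<exists>W H. W \<in> carrier_mat (dim_row X) (nonneg_rank X) \<and> H \<in> carrier_mat (nonneg_rank X) (dim_col X)
       \<and> nonneg_mat W \<and> nonneg_mat H \<and> X = W * H"
  unfolding nonneg_rank_def
proof (rule LeastI_ex)
  show "\<exists>r W H. W \<in> carrier_mat (dim_row X) r \<and> H \<in> carrier_mat r (dim_col X) \<and>
      nonneg_mat W \<and> nonneg_mat H \<and> X = W * H"
    using assms
    by (intro exI[of _ "dim_col X"] exI[of _ X] exI[of _ "1\<^sub>m (dim_col X)"])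
       (auto simp: nonneg_mat_def)
qed

lemma nr_sandwich:
  assumes "A \<in> carrier_mat m p" "Y \<in> carrier_mat p q" "B \<in> carrier_mat q n"
    "nonneg_mat A" "nonneg_mat Y" "nonneg_mat B" "X = A * Y * B"
  shows "nonneg_rank X \<le> nonneg_rank Y"
proof -
  obtain W H where WH: "W \<in> carrier_mat p (nonneg_rank Y)" "H \<in> carrier_mat (nonneg_rank Y) q"
    "nonneg_mat W" "nonneg_mat H" "Y = W * H"
    using nr_exists[OF assms(5)] assms(2) by auto
  have AW: "A * W \<in> carrier_mat m (nonneg_rank Y)" using assms(1) WH(1) by (rule mult_carrier_mat)
  have HB: "H * B \<in> carrier_mat (nonneg_rank Y) n" using WH(2) assms(3) by (rule mult_carrier_mat)
  have "X = A * (W * H) * B" using assms(7) WH(5) by simp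
  also have "A * (W * H) = A * W * H" by (rule assoc_mult_mat[symmetric, OF assms(1) WH(1) WH(2)])
  also have "A * W * H * B = (A * W) * (H * B)" by (rule assoc_mult_mat[OF AW WH(2) assms(3)])
  finally have X: "X = (A * W) * (H * B)" .
  have Xc: "X \<in> carrier_mat m n" unfolding X using AW HB by (rule mult_carrier_mat)
  show ?thesis
    by (rule nr_le[OF Xc AW HB nonneg_mult[OF assms(1) WH(1) assms(4) WH(3)]
          nonneg_mult[OF WH(2) assms(3) WH(4) assms(6)] X])
qed

lemma nr_transpose_le:
  assumes "nonneg_mat X"
  shows "nonneg_rank (transpose_mat X) \<le> nonneg_rank X"
proof -
  obtain W H where WH: "W \<in> carrier_mat (dim_row X) (nonneg_rank X)" "H \<in> carrier_mat (nonneg_rank X) (dim_col X)"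
    "nonneg_mat W" "nonneg_mat H" "X = W * H"
    using nr_exists[OF assms] by auto
  have T: "transpose_mat X = transpose_mat H * transpose_mat W"
    unfolding WH(5) by (rule transpose_mult[OF WH(1) WH(2)])
  have n: "nonneg_mat (transpose_mat H)" "nonneg_mat (transpose_mat W)"
    using WH(3,4) by (auto simp: nonneg_mat_def)
  have c: "transpose_mat H \<in> carrier_mat (dim_col X) (nonneg_rank X)"
    "transpose_mat W \<in> carrier_mat (nonneg_rank X) (dim_row X)"
    "transpose_mat X \<in> carrier_mat (dim_col X) (dim_row X)" using WH(1,2) by auto
  show ?thesis by (rule nr_le[OF c(3) c(1) c(2) n T])
qed

lemma nr_transpose:
  assumes "nonneg_mat X"
  shows "nonneg_rank (transpose_mat X) = nonneg_rank X"
proof -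
  have "nonneg_mat (transpose_mat X)" using assms by (auto simp: nonneg_mat_def)
  from nr_transpose_le[OF this] nr_transpose_le[OF assms] show ?thesis by simp
qed




lemma affine_comb:
  fixes g :: "'a::real_inner"
  assumes "sum \<mu> T = 1"
  shows "(\<Sum>t\<in>T. \<mu> t * (g \<bullet> w t + h)) = g \<bullet> (\<Sum>t\<in>T. \<mu> t *\<^sub>R w t) + h"
proof -
  have "(\<Sum>t\<in>T. \<mu> t * (g \<bullet> w t + h)) = (\<Sum>t\<in>T. \<mu> t * (g \<bullet> w t)) + (\<Sum>t\<in>T. \<mu> t) * h"
    by (simp add: distrib_left sum.distrib sum_distrib_right)
  also have "(\<Sum>t\<in>T. \<mu> t * (g \<bullet> w t)) = g \<bullet> (\<Sum>t\<in>T. \<mu> t *\<^sub>R w t)"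
    by (simp add: inner_sum_right)
  finally show ?thesis using assms by simp
qed

lemma floor_ge3: "3 \<le> \<lfloor>(real n + 6) / 2\<rfloor>"
proof -
  have "3 \<le> (real n + 6) / 2" by simp
  then show ?thesis by (metis floor_mono floor_numeral)
qed

lemma nr_le_cols:
  assumes "X \<in> carrier_mat m n" "nonneg_mat X"
  shows "nonneg_rank X \<le> n"
  by (rule nr_le[OF assms(1) assms(1) one_carrier_mat assms(2)]) (use assms in \<open>auto simp: nonneg_mat_def\<close>)



lemma core:
  fixes X :: "real mat" and p g :: "nat \<Rightarrow> real^2" and h \<sigma> :: "nat \<Rightarrow> real"
  assumes hyp: "\<forall>n::nat. n \<ge> 3 \<longrightarrow> (\<forall>v. convex_polygon_vertices n v \<longrightarrow>
      (\<forall>m a b. facet_description (convex hull (v ` {..<n})) m a b \<longrightarrow>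
         int (nonneg_rank (slack_matrix m n a b v)) \<le> \<lfloor>(real n + 6) / 2\<rfloor>))"
  and Xc: "X \<in> carrier_mat m n" and Xn: "nonneg_mat X"
  and rep: "\<And>r j. r < m \<Longrightarrow> j < n \<Longrightarrow> X $$ (r, j) = \<sigma> j * (g r \<bullet> p j + h r)"
  and \<sigma>: "\<And>j. j < n \<Longrightarrow> \<sigma> j \<ge> 0"
  shows "int (nonneg_rank X) \<le> \<lfloor>(real n + 6) / 2\<rfloor>"
proof -
  define J where "J = {j. j < n \<and> 0 < \<sigma> j}"
  define Q where "Q = p ` J"
  define P where "P = convex hull Q"
  define E where "E = {x. x extreme_point_of P}"
  have JS: "J \<subseteq> {..<n}" unfolding J_def by auto
  then have finJ: "finite J" by (rule finite_subset) simp
  have cJ: "card J \<le> n" using card_mono[OF _ JS] by simp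
  have finQ: "finite Q" unfolding Q_def using finJ by simp
  have EQ: "E \<subseteq> Q" using extreme_points_of_convex_hull unfolding E_def P_def by blast
  have finE: "finite E" using finite_subset[OF EQ finQ] .
  define k where "k = card E"
  have "k \<le> card Q" unfolding k_def by (rule card_mono[OF finQ EQ])
  also have "card Q \<le> card J" unfolding Q_def by (rule card_image_le[OF finJ])
  finally have kn: "k \<le> n" using cJ by simp
  obtain v where v: "bij_betw v {0..<k} E" using ex_bij_betw_nat_finite[OF finE] unfolding k_def by blast
  then have vimg: "v ` {..<k} = E" and vinj: "inj_on v {..<k}"
    by (auto simp: bij_betw_def atLeast0LessThan)
  have PE: "P = convex hull (v ` {..<k})"
    unfolding vimg E_def P_def by (rule Krein_Milman_polytope[OF finQ])
  define f where "f r x = g r \<bullet> x + h r" for r x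
  have fQ: "0 \<le> f r x" if r: "r < m" and x: "x \<in> Q" for r x
  proof -
    obtain j where j: "j \<in> J" "x = p j" using x unfolding Q_def by blast
    have "0 \<le> X $$ (r, j)" using Xn Xc r j(1) by (auto simp: nonneg_mat_def J_def)
    then have "0 \<le> \<sigma> j * f r x" using rep[OF r] j by (auto simp: f_def J_def)
    moreover have "0 < \<sigma> j" using j(1) by (simp add: J_def)
    ultimately show ?thesis by (simp add: zero_le_mult_iff)
  qed
  have fP: "0 \<le> f r x" if r: "r < m" and x: "x \<in> P" for r x
  proof -
    have eq: "{x. 0 \<le> f r x} = {x. inner (g r) x \<ge> - h r}" by (auto simp: f_def)
    have "convex {x. 0 \<le> f r x}" unfolding eq by (rule convex_halfspace_ge)
    moreover have "Q \<subseteq> {x. 0 \<le> f r x}" using fQ[OF r] by blast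
    ultimately have "P \<subseteq> {x. 0 \<le> f r x}" unfolding P_def by (rule hull_minimal[where S=convex, rotated])
    then show ?thesis using x by blast
  qed
  have vE: "v t \<in> E" if "t < k" for t using vimg that by blast
  have vP: "v t \<in> P" if "t < k" for t using vE[OF that] by (auto simp: E_def extreme_point_of_def)
  have comb: "\<exists>\<mu>. (\<forall>t<k. 0 \<le> \<mu> t) \<and> sum \<mu> {..<k} = 1 \<and> (\<Sum>t<k. \<mu> t *\<^sub>R v t) = p j" if j: "j \<in> J" for j
  proof -
    have "p j \<in> P" unfolding P_def Q_def using j by (simp add: hull_inc)
    then obtain u where u: "\<forall>x\<in>v ` {..<k}. 0 \<le> u x" "sum u (v ` {..<k}) = 1"
       "(\<Sum>x\<in>v ` {..<k}. u x *\<^sub>R x) = p j"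
      unfolding PE convex_hull_finite[OF finite_imageI[OF finite_lessThan]] by blast
    show ?thesis
    proof (intro exI[of _ "\<lambda>t. u (v t)"] conjI allI impI)
      show "0 \<le> u (v t)" if "t < k" for t using u(1) that by blast
      show "sum (\<lambda>t. u (v t)) {..<k} = 1" using u(2) sum.reindex[OF vinj, of u] by simp
      show "(\<Sum>t<k. u (v t) *\<^sub>R v t) = p j" using u(3) sum.reindex[OF vinj, of "\<lambda>x. u x *\<^sub>R x"] by simp
    qed
  qed
  obtain \<mu> where \<mu>: "\<And>j. j \<in> J \<Longrightarrow> (\<forall>t<k. 0 \<le> \<mu> j t) \<and> sum (\<mu> j) {..<k} = 1 \<and> (\<Sum>t<k. \<mu> j t *\<^sub>R v t) = p j"
    using comb by metis
  define N where "N = mat m k (\<lambda>(r, t). f r (v t))"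
  define C where "C = mat k n (\<lambda>(t, j). if j \<in> J then \<sigma> j * \<mu> j t else 0)"
  have Nc: "N \<in> carrier_mat m k" and Cc: "C \<in> carrier_mat k n" by (simp_all add: N_def C_def)
  have Nn: "nonneg_mat N" unfolding nonneg_mat_def N_def using fP vP by auto
  have Cn: "nonneg_mat C" unfolding nonneg_mat_def C_def using \<mu> \<sigma> by (auto simp: J_def)
  have XNC: "X = N * C"
  proof (rule eq_matI)
    show "dim_row X = dim_row (N * C)" "dim_col X = dim_col (N * C)" using Xc Nc Cc by auto
    fix r j assume "r < dim_row (N * C)" "j < dim_col (N * C)"
    then have r: "r < m" and j: "j < n" using Nc Cc by auto
    have "(N * C) $$ (r, j) = (\<Sum>t<k. f r (v t) * (if j \<in> J then \<sigma> j * \<mu> j t else 0))"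
      unfolding mult_entry[OF Nc Cc r j] using r j by (simp add: N_def C_def)
    also have "\<dots> = X $$ (r, j)"
    proof (cases "j \<in> J")
      case True
      have "(\<Sum>t<k. f r (v t) * (\<sigma> j * \<mu> j t)) = \<sigma> j * (\<Sum>t<k. \<mu> j t * (g r \<bullet> v t + h r))"
        by (simp add: sum_distrib_left f_def algebra_simps)
      also have "\<dots> = \<sigma> j * (g r \<bullet> p j + h r)"
        using affine_comb[of "\<mu> j" "{..<k}" "g r" v "h r"] \<mu>[OF True] by simp
      finally show ?thesis using True rep[OF r j] by simp
    next
      case False
      then have "\<sigma> j = 0" using \<sigma>[OF j] j by (auto simp: J_def)
      then show ?thesis using False rep[OF r j] by simp
    qed
    finally show "X $$ (r, j) = (N * C) $$ (r, j)" by simp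
  qed
  show ?thesis
  proof (cases "k < 3")
    case True
    have "nonneg_rank X \<le> k" by (rule nr_le[OF Xc Nc Cc Nn Cn XNC])
    then have "int (nonneg_rank X) \<le> 3" using True by simp
    then show ?thesis using floor_ge3[of n] by linarith
  next
    case False
    have cpv: "convex_polygon_vertices k v"
      unfolding convex_polygon_vertices_def using vinj vE PE by (auto simp: E_def)
    have kk: "(0::nat) \<in> {..<k}" "(1::nat) \<in> {..<k}" "(2::nat) \<in> {..<k}" using False by auto
    have d: "v 0 \<noteq> v 1" "v 0 \<noteq> v 2" "v 1 \<noteq> v 2"
      using inj_onD[OF vinj _ kk(1) kk(2)] inj_onD[OF vinj _ kk(1) kk(3)] inj_onD[OF vinj _ kk(2) kk(3)]
      by auto
    have aff: "affine hull P = UNIV"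
      using three_extreme_full[of "v 0" P "v 1" "v 2"] vE False d by (simp add: E_def)
    have poly: "polytope P" unfolding polytope_def P_def using finQ by blast
    obtain M a b where fd: "facet_description P M a b" using facet_desc_exists[OF poly aff] by blast
    have Pab: "P = {x. \<forall>i<M. a i \<bullet> x \<le> b i}" using fd by (simp add: facet_description_def)
    have hk: "int (nonneg_rank (slack_matrix M k a b v)) \<le> \<lfloor>(real k + 6) / 2\<rfloor>"
      using hyp False cpv fd PE by auto
    have bndP: "bounded P" unfolding P_def by (rule finite_imp_bounded_convex_hull[OF finQ])
    have far: "\<exists>l. (\<forall>i<M. 0 \<le> l i) \<and> (\<forall>x. g r \<bullet> x + h r = (\<Sum>i<M. l i * (b i - a i \<bullet> x)))"
      if r: "r < m" for r
      by (rule farkas_poly[OF Pab bndP vP[of 0] vP[of 1] d(1)]) (use False fP[OF r] in \<open>auto simp: f_def\<close>)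
    obtain L where L: "\<And>r. r < m \<Longrightarrow> (\<forall>i<M. 0 \<le> L r i) \<and> (\<forall>x. g r \<bullet> x + h r = (\<Sum>i<M. L r i * (b i - a i \<bullet> x)))"
      using far by metis
    define Lm where "Lm = mat m M (\<lambda>(r, i). L r i)"
    define S where "S = slack_matrix M k a b v"
    have Lc: "Lm \<in> carrier_mat m M" and Sc: "S \<in> carrier_mat M k" by (simp_all add: Lm_def S_def slack_matrix_def)
    have Ln: "nonneg_mat Lm" unfolding nonneg_mat_def Lm_def using L by auto
    have Sn: "nonneg_mat S" unfolding nonneg_mat_def S_def slack_matrix_def
      using vP Pab by auto
    have NLS: "N = Lm * S"
    proof (rule eq_matI)
      show "dim_row N = dim_row (Lm * S)" "dim_col N = dim_col (Lm * S)" using Nc Lc Sc by auto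
      fix r t assume "r < dim_row (Lm * S)" "t < dim_col (Lm * S)"
      then have r: "r < m" and t: "t < k" using Lc Sc by auto
      have "(Lm * S) $$ (r, t) = (\<Sum>i<M. L r i * (b i - a i \<bullet> v t))"
        unfolding mult_entry[OF Lc Sc r t] using r t by (simp add: Lm_def S_def slack_matrix_def)
      also have "\<dots> = f r (v t)" using L[OF r] by (simp add: f_def)
      finally show "N $$ (r, t) = (Lm * S) $$ (r, t)" using r t by (simp add: N_def)
    qed
    have "X = Lm * S * C" using XNC NLS by simp
    then have "nonneg_rank X \<le> nonneg_rank S" by (rule nr_sandwich[OF Lc Sc Cc Ln Sn Cn])
    moreover have "\<lfloor>(real k + 6) / 2\<rfloor> \<le> \<lfloor>(real n + 6) / 2\<rfloor>"
      by (rule floor_mono) (use kn in simp)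
    ultimately show ?thesis using hk unfolding S_def by linarith
  qed
qed



lemma sum3: "(\<Sum>t<(3::nat). f t) = f 0 + f 1 + (f 2 :: real)"
  by (simp add: eval_nat_numeral)

lemma inner2: "(vector [a, b] :: real^2) \<bullet> vector [c, d] = a * c + b * d"
  by (simp add: inner_vec_def sum_2)

lemma rank3_fact:
  fixes X :: "real mat"
  assumes Xc: "X \<in> carrier_mat m n" and rk: "vec_space.rank m X = 3"
  shows "\<exists>U V. \<forall>r<m. \<forall>j<n. X $$ (r, j) = (\<Sum>t<(3::nat). U r t * V t j)"
proof -
  interpret vec_space "TYPE(real)" m .
  have cs: "set (cols X) \<subseteq> carrier_vec m" using Xc cols_dim by blast
  obtain S where S: "finite S" "maximal S (\<lambda>T. T \<subseteq> set (cols X) \<and> lin_indpt T)"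
    using maximal_exists_superset[of "set (cols X)" "\<lambda>T. T \<subseteq> set (cols X) \<and> lin_indpt T" "{}"]
    by (auto simp: lin_dep_def)
  have card: "card S = 3" using rank_card_indpt[OF Xc S(2)] rk by simp
  have SS: "S \<subseteq> set (cols X)" "lin_indpt S" using S(2) by (auto simp: maximal_def)
  have Sc: "S \<subseteq> carrier_vec m" using SS cs by blast
  have inspan: "c \<in> span S" if c: "c \<in> set (cols X)" for c
  proof (rule ccontr)
    assume nc: "c \<notin> span S"
    then have cS: "c \<notin> S" using in_own_span[OF Sc] by blast
    have cc: "c \<in> carrier_vec m" using c cs by blast
    have "lin_indpt (S \<union> {c})" using lin_dep_iff_in_span[OF Sc SS(2) cc cS] nc by simp
    then have "S \<union> {c} \<subseteq> set (cols X) \<and> lin_indpt (S \<union> {c})" using SS c by auto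
    with S(2) have "S \<union> {c} = S" unfolding maximal_def by blast
    then show False using cS by blast
  qed
  obtain w0 w1 w2 where S3: "S = {w0, w1, w2}" "w0 \<noteq> w1" "w1 \<noteq> w2" "w0 \<noteq> w2"
    using card card_3_iff by metis
  have "\<exists>a. col X j = lincomb a S" if j: "j < n" for j
  proof -
    have "col X j \<in> set (cols X)" using j Xc by (metis carrier_matD(2) cols_length cols_nth nth_mem)
    then have "col X j \<in> span S" by (rule inspan)
    then show ?thesis unfolding finite_span[OF S(1) Sc] by blast
  qed
  then obtain A where A: "\<And>j. j < n \<Longrightarrow> col X j = lincomb (A j) S" by metis
  define U where "U r t = [w0, w1, w2] ! t $ r" for r t
  define V where "V t j = A j ([w0, w1, w2] ! t)" for t j
  have "X $$ (r, j) = (\<Sum>t<(3::nat). U r t * V t j)" if r: "r < m" and j: "j < n" for r j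
  proof -
    have "X $$ (r, j) = col X j $ r" using r j Xc by auto
    also have "\<dots> = (\<Sum>x\<in>S. A j x * x $ r)" unfolding A[OF j] by (rule lincomb_index[OF r Sc])
    also have "\<dots> = A j w0 * w0 $ r + A j w1 * w1 $ r + A j w2 * w2 $ r"
      using S3 by simp
    also have "\<dots> = (\<Sum>t<(3::nat). U r t * V t j)" unfolding sum3 by (simp add: U_def V_def)
    finally show ?thesis .
  qed
  then show ?thesis by blast
qed



lemma core3':
  fixes X :: "real mat" and A B C a b c :: "nat \<Rightarrow> real"
  assumes hyp: "\<forall>n::nat. n \<ge> 3 \<longrightarrow> (\<forall>v. convex_polygon_vertices n v \<longrightarrow>
      (\<forall>m a b. facet_description (convex hull (v ` {..<n})) m a b \<longrightarrow>
         int (nonneg_rank (slack_matrix m n a b v)) \<le> \<lfloor>(real n + 6) / 2\<rfloor>))"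
  and Xc: "X \<in> carrier_mat m n" and Xn: "nonneg_mat X"
  and fac: "\<And>r j. r < m \<Longrightarrow> j < n \<Longrightarrow> X $$ (r, j) = A r * a j + B r * b j + C r * c j"
  and sC: "(\<Sum>r<m. C r) \<noteq> 0 \<or> ((\<Sum>r<m. A r) = 0 \<and> (\<Sum>r<m. B r) = 0 \<and> (\<Sum>r<m. C r) = 0)"
  shows "int (nonneg_rank X) \<le> \<lfloor>(real n + 6) / 2\<rfloor>"
proof -
  define sA where "sA = (\<Sum>r<m. A r)"
  define sB where "sB = (\<Sum>r<m. B r)"
  define sC where "sC = (\<Sum>r<m. C r)"
  define \<sigma> where "\<sigma> j = sA * a j + sB * b j + sC * c j" for j
  have \<sigma>sum: "\<sigma> j = (\<Sum>r<m. X $$ (r, j))" if j: "j < n" for j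
    using j by (simp add: fac sum.distrib sum_distrib_right \<sigma>_def sA_def sB_def sC_def)
  have Xnn: "0 \<le> X $$ (r, j)" if "r < m" "j < n" for r j
    using Xn Xc that by (auto simp: nonneg_mat_def)
  have \<sigma>0: "\<sigma> j \<ge> 0" if "j < n" for j
    unfolding \<sigma>sum[OF that] by (rule sum_nonneg) (use Xnn that in auto)
  define p :: "nat \<Rightarrow> real^2" where "p j = vector [a j / \<sigma> j, b j / \<sigma> j]" for j
  define g :: "nat \<Rightarrow> real^2" where "g r = vector [A r - C r * sA / sC, B r - C r * sB / sC]" for r
  define h where "h r = C r / sC" for r
  show ?thesis
  proof (rule core[OF hyp Xc Xn _ \<sigma>0])
    fix r j assume r: "r < m" and j: "j < n"
    show "X $$ (r, j) = \<sigma> j * (g r \<bullet> p j + h r)"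
    proof (cases "\<sigma> j = 0")
      case True
      have "\<forall>r'\<in>{..<m}. X $$ (r', j) = 0"
        using \<sigma>sum[OF j] True sum_nonneg_eq_0_iff[of "{..<m}" "\<lambda>r. X $$ (r, j)"] Xnn j by auto
      then show ?thesis using True r by simp
    next
      case False
      have sC0: "sC \<noteq> 0" using False sC by (auto simp: \<sigma>_def sA_def sB_def sC_def)
      have "\<sigma> j * (g r \<bullet> p j + h r) = \<sigma> j * ((A r - C r * sA / sC) * (a j / \<sigma> j) + (B r - C r * sB / sC) * (b j / \<sigma> j) + C r / sC)"
        by (simp add: g_def p_def h_def inner2)
      also have "\<dots> = A r * a j + B r * b j + C r * (\<sigma> j - sA * a j - sB * b j) / sC"
        using False sC0 by (simp add: field_simps)
      also have "\<sigma> j - sA * a j - sB * b j = sC * c j" by (simp add: \<sigma>_def)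
      also have "A r * a j + B r * b j + C r * (sC * c j) / sC = A r * a j + B r * b j + C r * c j"
        using sC0 by simp
      finally show ?thesis using fac[OF r j] by simp
    qed
  qed
qed

lemma core3:
  fixes X :: "real mat" and U V :: "nat \<Rightarrow> nat \<Rightarrow> real"
  assumes hyp: "\<forall>n::nat. n \<ge> 3 \<longrightarrow> (\<forall>v. convex_polygon_vertices n v \<longrightarrow>
      (\<forall>m a b. facet_description (convex hull (v ` {..<n})) m a b \<longrightarrow>
         int (nonneg_rank (slack_matrix m n a b v)) \<le> \<lfloor>(real n + 6) / 2\<rfloor>))"
  and Xc: "X \<in> carrier_mat m n" and Xn: "nonneg_mat X"
  and fac: "\<And>r j. r < m \<Longrightarrow> j < n \<Longrightarrow> X $$ (r, j) = (\<Sum>t<(3::nat). U r t * V t j)"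
  shows "int (nonneg_rank X) \<le> \<lfloor>(real n + 6) / 2\<rfloor>"
proof -
  define s where "s t = (\<Sum>r<m. U r t)" for t
  have fac': "X $$ (r, j) = U r 0 * V 0 j + U r 1 * V 1 j + U r 2 * V 2 j" if "r < m" "j < n" for r j
    using fac[OF that] by (simp add: sum3)
  consider "s 2 \<noteq> 0" | "s 2 = 0 \<and> s 1 \<noteq> 0" | "s 2 = 0 \<and> s 1 = 0 \<and> s 0 \<noteq> 0" | "s 0 = 0 \<and> s 1 = 0 \<and> s 2 = 0"
    by blast
  then show ?thesis
  proof cases
    case 1
    show ?thesis
      by (rule core3'[OF hyp Xc Xn, where A="\<lambda>r. U r 0" and a="\<lambda>j. V 0 j" and B="\<lambda>r. U r 1"
            and b="\<lambda>j. V 1 j" and C="\<lambda>r. U r 2" and c="\<lambda>j. V 2 j"])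
         (use fac' 1 in \<open>simp_all add: s_def\<close>)
  next
    case 2
    show ?thesis
      by (rule core3'[OF hyp Xc Xn, where A="\<lambda>r. U r 0" and a="\<lambda>j. V 0 j" and B="\<lambda>r. U r 2"
            and b="\<lambda>j. V 2 j" and C="\<lambda>r. U r 1" and c="\<lambda>j. V 1 j"])
         (use fac' 2 in \<open>simp_all add: s_def algebra_simps\<close>)
  next
    case 3
    show ?thesis
      by (rule core3'[OF hyp Xc Xn, where A="\<lambda>r. U r 1" and a="\<lambda>j. V 1 j" and B="\<lambda>r. U r 2"
            and b="\<lambda>j. V 2 j" and C="\<lambda>r. U r 0" and c="\<lambda>j. V 0 j"])
         (use fac' 3 in \<open>simp_all add: s_def algebra_simps\<close>)
  next
    case 4
    show ?thesis
      by (rule core3'[OF hyp Xc Xn, where A="\<lambda>r. U r 0" and a="\<lambda>j. V 0 j" and B="\<lambda>r. U r 1"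
            and b="\<lambda>j. V 1 j" and C="\<lambda>r. U r 2" and c="\<lambda>j. V 2 j"])
         (use fac' 4 in \<open>simp_all add: s_def\<close>)
  qed
qed

theorem mainTheorem1:
  assumes hyp: "\<forall>n::nat. n \<ge> 3 \<longrightarrow> (\<forall>v. convex_polygon_vertices n v \<longrightarrow>
      (\<forall>m a b. facet_description (convex hull (v ` {..<n})) m a b \<longrightarrow>
         int (nonneg_rank (slack_matrix m n a b v)) \<le> \<lfloor>(real n + 6) / 2\<rfloor>))"
  shows "\<forall>(m::nat) (n::nat) (X::real mat). X \<in> carrier_mat m n \<longrightarrow> nonneg_mat X \<longrightarrow>
      real_rank X = 3 \<longrightarrow> int (nonneg_rank X) \<le> \<lfloor>(real (min m n) + 6) / 2\<rfloor>"
proof (intro allI impI)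
  fix m n :: nat and X :: "real mat"
  assume Xc: "X \<in> carrier_mat m n" and Xn: "nonneg_mat X" and rk: "real_rank X = 3"
  have rk': "vec_space.rank m X = 3" using rk Xc by (simp add: real_rank_def)
  obtain U V where fac: "\<forall>r<m. \<forall>j<n. X $$ (r, j) = (\<Sum>t<(3::nat). U r t * V t j)"
    using rank3_fact[OF Xc rk'] by blast
  have c1: "int (nonneg_rank X) \<le> \<lfloor>(real n + 6) / 2\<rfloor>"
    by (rule core3[OF hyp Xc Xn, where U=U and V=V]) (use fac in blast)
  have XTc: "transpose_mat X \<in> carrier_mat n m" using Xc by simp
  have XTn: "nonneg_mat (transpose_mat X)" using Xn Xc by (auto simp: nonneg_mat_def)
  have c2: "int (nonneg_rank (transpose_mat X)) \<le> \<lfloor>(real m + 6) / 2\<rfloor>"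
  proof (rule core3[OF hyp XTc XTn, where U="\<lambda>j t. V t j" and V="\<lambda>t r. U r t"])
    fix j r assume j: "j < n" and r: "r < m"
    show "transpose_mat X $$ (j, r) = (\<Sum>t<(3::nat). V t j * U r t)"
      using fac j r Xc by (simp add: mult.commute)
  qed
  have "nonneg_rank (transpose_mat X) = nonneg_rank X" by (rule nr_transpose[OF Xn])
  then show "int (nonneg_rank X) \<le> \<lfloor>(real (min m n) + 6) / 2\<rfloor>"
    using c1 c2 by (cases "m \<le> n") (simp_all add: min_def)
qed


end
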